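(* For all level expressions $l_1, l_2$: $l_1 \simeq l_2$ if and only if $[\![ l_1 ]\!]_\sigma = [\![ l_2 ]\!]_\sigma$ for every function $\sigma : \mathcal{I} \to \mathbb{N}$.
   Context: Level expressions are generated by the grammar $l ::= i \mid \mathtt{z} \mid \mathtt{s}\,l \mid l \sqcup l'$, where $i$ ranges over an infinite set $\mathcal{I}$ of level variables. The relation $\simeq$ is the smallest congruence on level expressions (reflexive, symmetric, transitive, closed under the constructors $\mathtt{s}$ and $\sqcup$, and closed under substitution of level expressions for level variables) containing the equations $i_1 \sqcup (i_2 \sqcup i_3) \approx (i_1 \sqcup i_2) \sqcup i_3$, $i_1 \sqcup i_2 \approx i_2 \sqcup i_1$, $\mathtt{s}\,(i_1 \sqcup i_2) \approx \mathtt{s}\,i_1 \sqcup \mathtt{s}\,i_2$, $i \sqcup \mathtt{s}\,i \approx \mathtt{s}\,i$, $i \sqcup \mathtt{z} \approx i$, $i \sqcup i \approx i$ (for level variables $i, i_1, i_2, i_3$). Given $\sigma : \mathcal{I} \to \mathbb{N}$, the interpretation $[\![ l ]\!]_\sigma \in \mathbb{N}$ is defined by $[\![ i ]\!]_\sigma = \sigma(i)$, $[\![ \mathtt{z} ]\!]_\sigma = 0$, $[\![ \mathtt{s}\,l ]\!]_\sigma = [\![ l ]\!]_\sigma + 1$, $[\![ l \sqcup l' ]\!]_\sigma = \max([\![ l ]\!]_\sigma, [\![ l' ]\!]_\sigma)$. *)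

theory Defs
  imports Main
begin

datatype 'i lvl = Var 'i | Z | S "'i lvl" | Max "'i lvl" "'i lvl"

primrec lsubst :: "('i \<Rightarrow> 'i lvl) \<Rightarrow> 'i lvl \<Rightarrow> 'i lvl" where
  "lsubst f (Var i) = f i"
| "lsubst f Z = Z"
| "lsubst f (S l) = S (lsubst f l)"
| "lsubst f (Max l l') = Max (lsubst f l) (lsubst f l')"

primrec interp :: "('i \<Rightarrow> nat) \<Rightarrow> 'i lvl \<Rightarrow> nat" where
  "interp \<sigma> (Var i) = \<sigma> i"
| "interp \<sigma> Z = 0"
| "interp \<sigma> (S l) = interp \<sigma> l + 1"
| "interp \<sigma> (Max l l') = max (interp \<sigma> l) (interp \<sigma> l')"

inductive lax :: "'i lvl \<Rightarrow> 'i lvl \<Rightarrow> bool" where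
  assoc: "lax (Max (Var i1) (Max (Var i2) (Var i3))) (Max (Max (Var i1) (Var i2)) (Var i3))"
| comm: "lax (Max (Var i1) (Var i2)) (Max (Var i2) (Var i1))"
| sdist: "lax (S (Max (Var i1) (Var i2))) (Max (S (Var i1)) (S (Var i2)))"
| subsume: "lax (Max (Var i) (S (Var i))) (S (Var i))"
| zero: "lax (Max (Var i) Z) (Var i)"
| idem: "lax (Max (Var i) (Var i)) (Var i)"

inductive leq :: "'i lvl \<Rightarrow> 'i lvl \<Rightarrow> bool" where
  ax: "lax l r \<Longrightarrow> leq l r"
| refl: "leq l l"
| sym: "leq l r \<Longrightarrow> leq r l"
| trans: "leq l m \<Longrightarrow> leq m r \<Longrightarrow> leq l r"
| congS: "leq l r \<Longrightarrow> leq (S l) (S r)"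
| congMax: "leq l r \<Longrightarrow> leq l' r' \<Longrightarrow> leq (Max l l') (Max r r')"
| subst: "leq l r \<Longrightarrow> leq (lsubst f l) (lsubst f r)"

end

theory Submission
  imports Defs
begin

lemma interp_lsubst: "interp \<sigma> (lsubst f l) = interp (\<lambda>i. interp \<sigma> (f i)) l"
  by (induction l) auto

lemma sound: "leq l r \<Longrightarrow> interp \<sigma> l = interp \<sigma> r"
proof (induction arbitrary: \<sigma> rule: leq.induct)
  case (ax l r) then show ?case by (induction rule: lax.induct) auto
next
  case (subst l r f) then show ?case by (simp add: interp_lsubst)
qed auto

lemmas [trans] = leq.trans

locale three =
  fixes x y z :: 'i
  assumes d: "x \<noteq> y" "x \<noteq> z" "y \<noteq> z"
begin

definition fs :: "'i lvl \<Rightarrow> 'i lvl \<Rightarrow> 'i lvl \<Rightarrow> 'i \<Rightarrow> 'i lvl" where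
  "fs a b c = (\<lambda>j. if j = x then a else if j = y then b else c)"

lemma fsx[simp]: "fs a b c x = a" and fsy[simp]: "fs a b c y = b" and fsz[simp]: "fs a b c z = c"
  using d by (auto simp: fs_def)

lemma m_assoc: fixes a b c t :: "'i lvl" shows "leq (Max a (Max b c)) (Max (Max a b) c)"
  using leq.subst[OF leq.ax[OF lax.assoc[of x y z]], of "fs a b c"] by simp
lemma m_comm: fixes a b c t :: "'i lvl" shows "leq (Max a b) (Max b a)"
  using leq.subst[OF leq.ax[OF lax.comm[of x y]], of "fs a b a"] by simp
lemma s_dist: fixes a b c t :: "'i lvl" shows "leq (S (Max a b)) (Max (S a) (S b))"
  using leq.subst[OF leq.ax[OF lax.sdist[of x y]], of "fs a b a"] by simp
lemma m_subsume: fixes a b c t :: "'i lvl" shows "leq (Max a (S a)) (S a)"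
  using leq.subst[OF leq.ax[OF lax.subsume[of x]], of "fs a a a"] by simp
lemma m_zero: fixes a b c t :: "'i lvl" shows "leq (Max a Z) a"
  using leq.subst[OF leq.ax[OF lax.zero[of x]], of "fs a a a"] by simp

lemma m_assoc': fixes a b c t :: "'i lvl" shows "leq (Max (Max a b) c) (Max a (Max b c))"
  by (rule leq.sym[OF m_assoc])

lemma sk_cong: fixes a b c t :: "'i lvl" shows "leq a b \<Longrightarrow> leq ((S^^k) a) ((S^^k) b)"
  by (induction k) (auto intro: leq.congS)

lemma sk_dist: fixes a b c t :: "'i lvl" shows "leq ((S^^k) (Max a b)) (Max ((S^^k) a) ((S^^k) b))"
proof (induction k)
  case 0 then show ?case by (simp add: leq.refl)
next
  case (Suc k)
  then show ?case using leq.trans[OF leq.congS[OF Suc] s_dist] by simp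
qed

lemma sub_d: fixes a b c t :: "'i lvl" shows "leq (Max t ((S^^d) t)) ((S^^d) t)"
proof (induction d)
  case 0 then show ?case
    using leq.subst[OF leq.ax[OF lax.idem[of x]], of "fs t t t"] by simp
next
  case (Suc d)
  let ?A = "(S^^d) t"
  have "leq (Max t (S ?A)) (Max t (Max ?A (S ?A)))"
    by (rule leq.congMax[OF leq.refl leq.sym[OF m_subsume]])
  also have "leq \<dots> (Max (Max t ?A) (S ?A))" by (rule m_assoc)
  also have "leq \<dots> (Max ?A (S ?A))" by (rule leq.congMax[OF Suc leq.refl])
  also have "leq \<dots> (S ?A)" by (rule m_subsume)
  finally show ?case by simp
qed

end

definition atm :: "nat \<times> 'i option \<Rightarrow> 'i lvl" where
  "atm a = (S^^fst a) (case snd a of None \<Rightarrow> Z | Some i \<Rightarrow> Var i)"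

fun mlist :: "(nat \<times> 'i option) list \<Rightarrow> 'i lvl" where
  "mlist [] = Z"
| "mlist [a] = atm a"
| "mlist (a # as) = Max (atm a) (mlist as)"

fun flat :: "'i lvl \<Rightarrow> (nat \<times> 'i option) list" where
  "flat (Var i) = [(0, Some i)]"
| "flat Z = [(0, None)]"
| "flat (S l) = map (\<lambda>(k, v). (Suc k, v)) (flat l)"
| "flat (Max a b) = flat a @ flat b"

lemma flat_ne: "flat l \<noteq> []"
  by (induction l) auto

fun domi :: "nat \<times> 'i option \<Rightarrow> nat \<times> 'i option \<Rightarrow> bool" where
  "domi (k, None) (m, _) = (k \<le> m)"
| "domi (k, Some i) (m, v) = (v = Some i \<and> k \<le> m)"

lemma interp_funpow: "interp \<sigma> ((S^^k) t) = interp \<sigma> t + k"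
  by (induction k) auto

lemma interp_atm: "interp \<sigma> (atm a) = fst a + (case snd a of None \<Rightarrow> 0 | Some i \<Rightarrow> \<sigma> i)"
  by (cases a) (auto simp: atm_def interp_funpow split: option.splits)

lemma interp_mlist_ge: "b \<in> set xs \<Longrightarrow> interp \<sigma> (atm b) \<le> interp \<sigma> (mlist xs)"
  by (induction xs rule: mlist.induct) auto

lemma interp_mlist_ex: "xs \<noteq> [] \<Longrightarrow> \<exists>b\<in>set xs. interp \<sigma> (mlist xs) = interp \<sigma> (atm b)"
  by (induction xs rule: mlist.induct) (auto simp: max_def)

context three begin

lemma mlist_app: fixes xs ys :: "(nat \<times> 'i option) list" shows "xs \<noteq> [] \<Longrightarrow> ys \<noteq> [] \<Longrightarrow> leq (mlist (xs @ ys)) (Max (mlist xs) (mlist ys))"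
proof (induction xs rule: mlist.induct)
  case (2 a) then show ?case by (cases ys) (auto intro: leq.refl)
next
  case (3 a b as)
  have "leq (mlist ((a # b # as) @ ys)) (Max (atm a) (Max (mlist (b#as)) (mlist ys)))"
    using 3 by (auto intro: leq.congMax leq.refl)
  also have "leq \<dots> (Max (mlist (a # b # as)) (mlist ys))" by (simp add: m_assoc)
  finally show ?case .
qed simp

lemma mlist_shift: fixes xs :: "(nat \<times> 'i option) list" shows "xs \<noteq> [] \<Longrightarrow> leq (mlist (map (\<lambda>(k, v). (Suc k, v)) xs)) (S (mlist xs))"
proof (induction xs rule: mlist.induct)
  case (2 a) then show ?case by (cases a) (auto simp: atm_def intro: leq.refl)
next
  case (3 a b as)
  have "leq (mlist (map (\<lambda>(k, v). (Suc k, v)) (a # b # as)))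
     (Max (S (atm a)) (S (mlist (b#as))))"
    using 3 by (cases a) (auto simp: atm_def intro!: leq.congMax leq.refl)
  also have "leq \<dots> (S (mlist (a # b # as)))" by (simp add: leq.sym[OF s_dist])
  finally show ?case .
qed simp

lemma flat_eq: fixes l :: "'i lvl" shows "leq l (mlist (flat l))"
proof (induction l)
  case (Var i) then show ?case by (simp add: atm_def leq.refl)
next
  case Z then show ?case by (simp add: atm_def leq.refl)
next
  case (S l)
  have "leq (S l) (S (mlist (flat l)))" using S by (rule leq.congS)
  also have "leq \<dots> (mlist (flat (S l)))" by (simp add: leq.sym[OF mlist_shift[OF flat_ne]])
  finally show ?case .
next
  case (Max a b)
  have "leq (Max a b) (Max (mlist (flat a)) (mlist (flat b)))" using Max by (rule leq.congMax)
  also have "leq \<dots> (mlist (flat (Max a b)))" by (simp add: leq.sym[OF mlist_app[OF flat_ne flat_ne]])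
  finally show ?case .
qed

lemma absorb_atm: fixes a b :: "nat \<times> 'i option" shows "domi a b \<Longrightarrow> leq (Max (atm b) (atm a)) (atm b)"
proof (induction a b rule: domi.induct)
  case (1 k m v)
  obtain d where m: "m = k + d" using 1 le_Suc_ex by auto
  let ?t = "case v of None \<Rightarrow> Z | Some i \<Rightarrow> Var i"
  have e: "(S^^m) ?t = (S^^k) ((S^^d) ?t)" by (simp add: m funpow_add)
  have "leq (Max (atm (m, v)) (atm (k, None))) (Max (atm (k, None)) (atm (m, v)))" by (rule m_comm)
  also have "leq \<dots> ((S^^k) (Max Z ((S^^d) ?t)))" by (simp add: leq.sym[OF sk_dist] atm_def e)
  also have "leq \<dots> ((S^^k) ((S^^d) ?t))"
    by (rule sk_cong) (rule leq.trans[OF m_comm m_zero])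
  finally show ?case by (simp add: atm_def e)
next
  case (2 k i m v)
  then have v: "v = Some i" and km: "k \<le> m" by auto
  obtain d where m: "m = k + d" using km le_Suc_ex by auto
  have e: "(S^^m) (Var i) = (S^^k) ((S^^d) (Var i))" by (simp add: m funpow_add)
  have "leq (Max (atm (m, v)) (atm (k, Some i))) (Max (atm (k, Some i)) (atm (m, v)))" by (rule m_comm)
  also have "leq \<dots> ((S^^k) (Max (Var i) ((S^^d) (Var i))))" by (simp add: leq.sym[OF sk_dist] atm_def e v)
  also have "leq \<dots> ((S^^k) ((S^^d) (Var i)))" by (rule sk_cong) (rule sub_d)
  finally show ?case by (simp add: atm_def e v)
qed

lemma absorb_list: fixes a :: "nat \<times> 'i option" and ys :: "(nat \<times> 'i option) list" shows "\<exists>b\<in>set ys. domi a b \<Longrightarrow> leq (Max (mlist ys) (atm a)) (mlist ys)"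
proof (induction ys rule: mlist.induct)
  case (2 b) then show ?case by (auto intro: absorb_atm)
next
  case (3 b c cs)
  let ?R = "mlist (c # cs)"
  show ?case
  proof (cases "domi a b")
    case True
    have "leq (Max (mlist (b # c # cs)) (atm a)) (Max (atm b) (Max ?R (atm a)))" by (simp add: m_assoc')
    also have "leq \<dots> (Max (atm b) (Max (atm a) ?R))" by (rule leq.congMax[OF leq.refl m_comm])
    also have "leq \<dots> (Max (Max (atm b) (atm a)) ?R)" by (rule m_assoc)
    also have "leq \<dots> (Max (atm b) ?R)" by (rule leq.congMax[OF absorb_atm[OF True] leq.refl])
    finally show ?thesis by simp
  next
    case False
    then have "\<exists>b\<in>set (c # cs). domi a b" using 3 by auto
    then have ih: "leq (Max ?R (atm a)) ?R" using 3 by blast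
    have "leq (Max (mlist (b # c # cs)) (atm a)) (Max (atm b) (Max ?R (atm a)))" by (simp add: m_assoc')
    also have "leq \<dots> (Max (atm b) ?R)" by (rule leq.congMax[OF leq.refl ih])
    finally show ?thesis by simp
  qed
qed simp

lemma absorb_all: fixes xs ys :: "(nat \<times> 'i option) list" shows "xs \<noteq> [] \<Longrightarrow> \<forall>a\<in>set xs. \<exists>b\<in>set ys. domi a b \<Longrightarrow> leq (Max (mlist ys) (mlist xs)) (mlist ys)"
proof (induction xs rule: mlist.induct)
  case (2 a) then show ?case using absorb_list by simp
next
  case (3 a b bs)
  let ?L = "mlist ys" and ?R = "mlist (b # bs)"
  have "leq (Max ?L (mlist (a # b # bs))) (Max (Max ?L (atm a)) ?R)" by (simp add: m_assoc)
  also have "leq \<dots> (Max ?L ?R)" using 3 by (auto intro!: leq.congMax absorb_list leq.refl)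
  also have "leq \<dots> ?L" using 3 by auto
  finally show ?case .
qed simp

end

lemma sem_dom:
  assumes ne: "ys \<noteq> []" and le: "\<forall>\<sigma>. interp \<sigma> (atm a) \<le> interp \<sigma> (mlist ys)"
  shows "\<exists>b\<in>set ys. domi a b"
proof (cases a)
  case (Pair k v)
  show ?thesis
  proof (cases v)
    case None
    obtain b where b: "b \<in> set ys" "interp (\<lambda>_. 0) (mlist ys) = interp (\<lambda>_. 0) (atm b)"
      using interp_mlist_ex[OF ne] by blast
    have "k \<le> fst b" using le[rule_format, of "\<lambda>_. 0"] b by (simp add: Pair None interp_atm split: option.splits)
    then show ?thesis using b by (intro bexI[of _ b]) (cases b, auto simp: Pair None)
  next
    case (Some i)
    define N where "N = k + sum_list (map fst ys) + 1"
    define \<sigma> where "\<sigma> = (\<lambda>j. if j = i then N else (0::nat))"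
    obtain b where b: "b \<in> set ys" "interp \<sigma> (mlist ys) = interp \<sigma> (atm b)"
      using interp_mlist_ex[OF ne] by blast
    have ge: "k + N \<le> interp \<sigma> (atm b)" using le[rule_format, of \<sigma>] b by (simp add: Pair Some interp_atm \<sigma>_def)
    have fb: "fst b \<le> sum_list (map fst ys)" using b(1) by (simp add: member_le_sum_list)
    obtain m w where bw: "b = (m, w)" by (cases b)
    show ?thesis
    proof (cases "w = Some i")
      case True
      then show ?thesis using ge b(1) by (intro bexI[of _ b]) (auto simp: bw Some Pair interp_atm \<sigma>_def)
    next
      case False
      then have "interp \<sigma> (atm b) \<le> m" by (auto simp: bw interp_atm \<sigma>_def split: option.splits)
      then show ?thesis using ge fb bw N_def by simp
    qed
  qed
qed

theorem mainTheorem1: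
  fixes l1 l2 :: "'i lvl"
  assumes "infinite (UNIV :: 'i set)"
  shows "leq l1 l2 \<longleftrightarrow> (\<forall>\<sigma> :: 'i \<Rightarrow> nat. interp \<sigma> l1 = interp \<sigma> l2)"
proof
  assume "leq l1 l2" then show "\<forall>\<sigma>. interp \<sigma> l1 = interp \<sigma> l2" using sound by blast
next
  assume eq: "\<forall>\<sigma>. interp \<sigma> l1 = interp \<sigma> l2"
  obtain x :: 'i where "x \<in> UNIV" by blast
  obtain y :: 'i where y: "y \<notin> {x}" using assms by (metis ex_new_if_finite finite.emptyI finite_insert)
  obtain z :: 'i where z: "z \<notin> {x, y}" using assms by (metis ex_new_if_finite finite.emptyI finite_insert)
  interpret three x y z using y z by unfold_locales auto
  let ?L1 = "mlist (flat l1)" and ?L2 = "mlist (flat l2)"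
  have e1: "leq l1 ?L1" and e2: "leq l2 ?L2" by (rule flat_eq)+
  have se: "\<forall>\<sigma>. interp \<sigma> ?L1 = interp \<sigma> ?L2"
    using eq sound[OF e1] sound[OF e2] by simp
  have d21: "\<forall>a\<in>set (flat l2). \<exists>b\<in>set (flat l1). domi a b"
    using sem_dom[OF flat_ne] interp_mlist_ge se by metis
  have d12: "\<forall>a\<in>set (flat l1). \<exists>b\<in>set (flat l2). domi a b"
    using sem_dom[OF flat_ne] interp_mlist_ge se by metis
  have "leq l1 ?L1" by (rule e1)
  also have "leq \<dots> (Max ?L1 ?L2)" by (rule leq.sym[OF absorb_all[OF flat_ne d21]])
  also have "leq \<dots> (Max ?L2 ?L1)" by (rule m_comm)
  also have "leq \<dots> ?L2" by (rule absorb_all[OF flat_ne d12])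
  also have "leq \<dots> l2" by (rule leq.sym[OF e2])
  finally show "leq l1 l2" .
qed

end
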